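(* For a topological monoid $S$ with unit $e$, the following are equivalent: (1) the quasi-uniformity $\mathcal L\wedge\mathcal R$ generates the topology of $S$; (2) $e$ is an open unit of $S$; (3) $S$ has open central shifts. Moreover, conditions (1)–(3) imply (4): the quasi-uniformity $\mathcal L\wedge\mathcal R$ is rotund.
   Context: A topological monoid is a topological space with a continuous associative multiplication having a unit $e$. Let $\mathcal N_e$ be a neighborhood base at $e$. $\mathcal L\wedge\mathcal R$ is the quasi-uniformity on $S$ generated by the base $\{\{(x,y)\in S\times S:y\in UxV\}:U,V\in\mathcal N_e\}$; it generates the topology of $S$ if the topology $\{W: \forall x\in W\ \exists E\in\mathcal L\wedge\mathcal R,\ \{y:(x,y)\in E\}\subset W\}$ equals the given topology. $e$ is an open unit if $UxU$ is a neighborhood of $x$ for every neighborhood $U$ of $e$ and every $x\in S$. $S$ has open central shifts if for each $a\in S$ the map $S\times S\to S$, $(x,y)\mapsto xay$, is open. For an entourage $E$ let $B(x;E)=\{y:(x,y)\in E\}$, $B(A;E)=\bigcup_{a\in A}B(a;E)$, $E\circ F=\{(x,z):\exists y\,((x,y)\in E,(y,z)\in F)\}$. A quasi-uniformity is rotund if it has a base closed under $\circ$ which is rotund: $B(\overline A;U)\subset\overline{B(A;W\circ U)}$ for all $A\subset S$ and all $U,W$ in the base (closures in the topology of $S$). *)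

theory Defs
  imports "HOL-Analysis.Analysis"
begin

text \<open>A topological monoid is modelled by the type class topological_monoid_mult
  (a topological space with a jointly continuous associative multiplication with unit 1).\<close>

definition unit_nhds :: "'a::topological_monoid_mult set set" where
  "unit_nhds = {U. \<exists>G. open G \<and> 1 \<in> G \<and> G \<subseteq> U}"

definition tri_prod :: "'a::monoid_mult set \<Rightarrow> 'a \<Rightarrow> 'a set \<Rightarrow> 'a set" where
  "tri_prod U x V = {u * x * v | u v. u \<in> U \<and> v \<in> V}"

definition LR_entourage :: "'a::monoid_mult set \<Rightarrow> 'a set \<Rightarrow> ('a \<times> 'a) set" where
  "LR_entourage U V = {(x, y). y \<in> tri_prod U x V}"

definition LR_base :: "('a::topological_monoid_mult \<times> 'a) set set" where
  "LR_base = {LR_entourage U V | U V. U \<in> unit_nhds \<and> V \<in> unit_nhds}"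

definition LR :: "('a::topological_monoid_mult \<times> 'a) set set" where
  "LR = {E. \<exists>B\<in>LR_base. B \<subseteq> E}"

definition ball_q :: "'a \<Rightarrow> ('a \<times> 'a) set \<Rightarrow> 'a set" where
  "ball_q x E = {y. (x, y) \<in> E}"

definition ball_set_q :: "'a set \<Rightarrow> ('a \<times> 'a) set \<Rightarrow> 'a set" where
  "ball_set_q A E = (\<Union>a\<in>A. ball_q a E)"

definition ent_comp :: "('a \<times> 'a) set \<Rightarrow> ('a \<times> 'a) set \<Rightarrow> ('a \<times> 'a) set" where
  "ent_comp E F = {(x, z). \<exists>y. (x, y) \<in> E \<and> (y, z) \<in> F}"

definition qu_topology :: "('a \<times> 'a) set set \<Rightarrow> 'a set set" where
  "qu_topology Q = {W. \<forall>x\<in>W. \<exists>E\<in>Q. ball_q x E \<subseteq> W}"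

definition qu_generates_topology :: "('a::topological_space \<times> 'a) set set \<Rightarrow> bool" where
  "qu_generates_topology Q \<longleftrightarrow> qu_topology Q = {W. open W}"

definition is_nhd :: "'a::topological_space set \<Rightarrow> 'a \<Rightarrow> bool" where
  "is_nhd N x \<longleftrightarrow> (\<exists>G. open G \<and> x \<in> G \<and> G \<subseteq> N)"

definition open_unit :: "'a::topological_monoid_mult itself \<Rightarrow> bool" where
  "open_unit _ \<longleftrightarrow> (\<forall>U\<in>(unit_nhds :: 'a set set). \<forall>x::'a. is_nhd (tri_prod U x U) x)"

definition open_central_shifts :: "'a::topological_monoid_mult itself \<Rightarrow> bool" where
  "open_central_shifts _ \<longleftrightarrow>
     (\<forall>a::'a. \<forall>W::('a \<times> 'a) set. open W \<longrightarrow> open ((\<lambda>(x, y). x * a * y) ` W))"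

definition rotund_base :: "('a::topological_space \<times> 'a) set set \<Rightarrow> bool" where
  "rotund_base \<B> \<longleftrightarrow>
     (\<forall>E\<in>\<B>. \<forall>F\<in>\<B>. ent_comp E F \<in> \<B>) \<and>
     (\<forall>A. \<forall>U\<in>\<B>. \<forall>W\<in>\<B>. ball_set_q (closure A) U \<subseteq> closure (ball_set_q A (ent_comp W U)))"

definition is_qu_base :: "('a \<times> 'a) set set \<Rightarrow> ('a \<times> 'a) set set \<Rightarrow> bool" where
  "is_qu_base \<B> Q \<longleftrightarrow> \<B> \<subseteq> Q \<and> (\<forall>E\<in>Q. \<exists>B\<in>\<B>. B \<subseteq> E)"

definition rotund :: "('a::topological_space \<times> 'a) set set \<Rightarrow> bool" where
  "rotund Q \<longleftrightarrow> (\<exists>\<B>. is_qu_base \<B> Q \<and> rotund_base \<B>)"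

end

theory Submission
  imports Defs
begin

lemma un_open: "open G \<Longrightarrow> (1::'a::topological_monoid_mult) \<in> G \<Longrightarrow> G \<in> unit_nhds"
  unfolding unit_nhds_def by blast

lemma un_one: "U \<in> unit_nhds \<Longrightarrow> (1::'a::topological_monoid_mult) \<in> U"
  unfolding unit_nhds_def by blast

lemma un_elim: "U \<in> unit_nhds \<Longrightarrow> (\<And>G. open G \<Longrightarrow> (1::'a::topological_monoid_mult) \<in> G \<Longrightarrow> G \<subseteq> U \<Longrightarrow> P) \<Longrightarrow> P"
  unfolding unit_nhds_def by blast

lemma ball_LR: "ball_q x (LR_entourage U V) = tri_prod U x V"
  unfolding ball_q_def LR_entourage_def by auto

lemma LR_ball_elim:
  assumes "E \<in> (LR :: ('a::topological_monoid_mult \<times> 'a) set set)"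
  obtains G where "open G" "1 \<in> G" "tri_prod G x G \<subseteq> ball_q x E"
proof -
  from assms obtain U V where UV: "U \<in> unit_nhds" "V \<in> unit_nhds" "LR_entourage U V \<subseteq> E"
    unfolding LR_def LR_base_def by blast
  from UV(1) obtain G1 where G1: "open G1" "1 \<in> G1" "G1 \<subseteq> U" by (rule un_elim)
  from UV(2) obtain G2 where G2: "open G2" "1 \<in> G2" "G2 \<subseteq> V" by (rule un_elim)
  have "tri_prod (G1 \<inter> G2) x (G1 \<inter> G2) \<subseteq> tri_prod U x V"
    using G1 G2 unfolding tri_prod_def by blast
  also have "\<dots> \<subseteq> ball_q x E" using UV(3) unfolding ball_q_def LR_entourage_def by auto
  finally show ?thesis using that[of "G1 \<inter> G2"] G1 G2 by blast
qed

lemma LR_mem: "U \<in> unit_nhds \<Longrightarrow> V \<in> unit_nhds \<Longrightarrow> LR_entourage U V \<in> (LR :: ('a::topological_monoid_mult \<times> 'a) set set)"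
  unfolding LR_def LR_base_def by blast

lemma left_nhd:
  fixes x :: "'a::topological_monoid_mult"
  assumes "open A" "x \<in> A"
  shows "open {u. u * x \<in> A}" "1 \<in> {u. u * x \<in> A}"
proof -
  have "continuous_on UNIV (\<lambda>u. u * x)" by (intro continuous_intros)
  from open_vimage[OF assms(1) this] show "open {u. u * x \<in> A}" by (simp add: vimage_def)
  show "1 \<in> {u. u * x \<in> A}" using assms by simp
qed

lemma right_nhd:
  fixes x :: "'a::topological_monoid_mult"
  assumes "open A" "x \<in> A"
  shows "open {u. x * u \<in> A}" "1 \<in> {u. x * u \<in> A}"
proof -
  have "continuous_on UNIV (\<lambda>u. x * u)" by (intro continuous_intros)
  from open_vimage[OF assms(1) this] show "open {u. x * u \<in> A}" by (simp add: vimage_def)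
  show "1 \<in> {u. x * u \<in> A}" using assms by simp
qed

lemma open_in_qu:
  fixes W :: "'a::topological_monoid_mult set"
  assumes "open W"
  shows "W \<in> qu_topology LR"
  unfolding qu_topology_def
proof (safe)
  fix x assume x: "x \<in> W"
  have c: "continuous_on UNIV (\<lambda>p::'a\<times>'a. fst p * x * snd p)" by (intro continuous_intros)
  have "open ((\<lambda>p::'a\<times>'a. fst p * x * snd p) -` W)" by (rule open_vimage[OF assms c])
  moreover have "(1,1) \<in> (\<lambda>p::'a\<times>'a. fst p * x * snd p) -` W" using x by simp
  ultimately obtain A B where AB: "open A" "open B" "(1,1) \<in> A \<times> B"
    "A \<times> B \<subseteq> (\<lambda>p::'a\<times>'a. fst p * x * snd p) -` W" by (rule open_prod_elim)
  have "A \<in> unit_nhds" "B \<in> unit_nhds" using AB by (auto intro: un_open)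
  then have "LR_entourage A B \<in> LR" by (rule LR_mem)
  moreover have "ball_q x (LR_entourage A B) \<subseteq> W"
    using AB(4) unfolding ball_LR tri_prod_def by auto
  ultimately show "\<exists>E\<in>LR. ball_q x E \<subseteq> W" by blast
qed

lemma qu_open:
  fixes S :: "'a::topological_monoid_mult itself"
  assumes ou: "open_unit S" and W: "W \<in> qu_topology (LR :: ('a \<times> 'a) set set)"
  shows "open W"
  unfolding open_subopen[of W]
proof
  fix x assume x: "x \<in> W"
  then obtain E where E: "E \<in> (LR :: ('a \<times> 'a) set set)" "ball_q x E \<subseteq> W"
    using W unfolding qu_topology_def by blast
  obtain G where G: "open G" "1 \<in> G" "tri_prod G x G \<subseteq> ball_q x E"
    using LR_ball_elim[OF E(1)] by blast
  have "is_nhd (tri_prod G x G) x" using ou G un_open unfolding open_unit_def by blast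
  then show "\<exists>T. open T \<and> x \<in> T \<and> T \<subseteq> W" unfolding is_nhd_def using G E by blast
qed

lemma gen_imp_ou:
  fixes S :: "'a::topological_monoid_mult itself"
  assumes g: "qu_generates_topology (LR :: ('a \<times> 'a) set set)"
  shows "open_unit S"
  unfolding open_unit_def
proof (intro ballI allI)
  fix U :: "'a set" and x :: 'a
  assume "U \<in> unit_nhds"
  then obtain N0 where N0: "open N0" "1 \<in> N0" "N0 \<subseteq> U" by (rule un_elim)
  have "tri_prod N0 x N0 \<in> qu_topology (LR :: ('a \<times> 'a) set set)"
    unfolding qu_topology_def
  proof safe
    fix y assume "y \<in> tri_prod N0 x N0"
    then obtain a b where ab: "a \<in> N0" "b \<in> N0" "y = a * x * b" unfolding tri_prod_def by blast
    define U' where "U' = {u. u * a \<in> N0}"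
    define V' where "V' = {u. b * u \<in> N0}"
    have "U' \<in> unit_nhds" unfolding U'_def using left_nhd[OF N0(1) ab(1)] by (rule un_open)
    moreover have "V' \<in> unit_nhds" unfolding V'_def using right_nhd[OF N0(1) ab(2)] by (rule un_open)
    ultimately have "LR_entourage U' V' \<in> LR" by (rule LR_mem)
    moreover have "ball_q y (LR_entourage U' V') \<subseteq> tri_prod N0 x N0"
    proof
      fix z assume "z \<in> ball_q y (LR_entourage U' V')"
      then obtain u v where uv: "u \<in> U'" "v \<in> V'" "z = u * y * v" unfolding ball_LR tri_prod_def by blast
      have "z = (u * a) * x * (b * v)" using uv(3) ab(3) by (simp add: mult.assoc)
      then show "z \<in> tri_prod N0 x N0" using uv unfolding U'_def V'_def tri_prod_def by blast
    qed
    ultimately show "\<exists>E\<in>LR. ball_q y E \<subseteq> tri_prod N0 x N0" by blast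
  qed
  then have "open (tri_prod N0 x N0)" using g unfolding qu_generates_topology_def by blast
  moreover have "x \<in> tri_prod N0 x N0" using N0 unfolding tri_prod_def by force
  moreover have "tri_prod N0 x N0 \<subseteq> tri_prod U x U" using N0 unfolding tri_prod_def by blast
  ultimately show "is_nhd (tri_prod U x U) x" unfolding is_nhd_def by blast
qed

lemma ou_imp_ocs:
  fixes S :: "'a::topological_monoid_mult itself"
  assumes ou: "open_unit S"
  shows "open_central_shifts S"
  unfolding open_central_shifts_def
proof (intro allI impI)
  fix a :: 'a and W :: "('a \<times> 'a) set"
  assume W: "open W"
  show "open ((\<lambda>(x, y). x * a * y) ` W)"
    unfolding open_subopen[of "(\<lambda>(x, y). x * a * y) ` W"]
  proof
    fix z assume "z \<in> (\<lambda>(x, y). x * a * y) ` W"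
    then obtain x y where xy: "(x, y) \<in> W" "z = x * a * y" by auto
    obtain A B where AB: "open A" "open B" "(x, y) \<in> A \<times> B" "A \<times> B \<subseteq> W"
      using open_prod_elim[OF W xy(1)] by blast
    define N0 where "N0 = {u. u * x \<in> A} \<inter> {u. y * u \<in> B}"
    have N0: "open N0" "1 \<in> N0" unfolding N0_def using left_nhd[of A x] right_nhd[of B y] AB by auto
    have "is_nhd (tri_prod N0 z N0) z" using ou N0 un_open unfolding open_unit_def by blast
    then obtain T where T: "open T" "z \<in> T" "T \<subseteq> tri_prod N0 z N0" unfolding is_nhd_def by blast
    have "tri_prod N0 z N0 \<subseteq> (\<lambda>(x, y). x * a * y) ` W"
    proof
      fix w assume "w \<in> tri_prod N0 z N0"
      then obtain u v where uv: "u \<in> N0" "v \<in> N0" "w = u * z * v" unfolding tri_prod_def by blast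
      have "w = (u * x) * a * (y * v)" using uv(3) xy(2) by (simp add: mult.assoc)
      moreover have "(u * x, y * v) \<in> W" using uv AB(4) unfolding N0_def by auto
      ultimately show "w \<in> (\<lambda>(x, y). x * a * y) ` W" by force
    qed
    then show "\<exists>T. open T \<and> z \<in> T \<and> T \<subseteq> (\<lambda>(x, y). x * a * y) ` W" using T by blast
  qed
qed

lemma ocs_imp_ou:
  fixes S :: "'a::topological_monoid_mult itself"
  assumes ocs: "open_central_shifts S"
  shows "open_unit S"
  unfolding open_unit_def
proof (intro ballI allI)
  fix U :: "'a set" and x :: 'a
  assume "U \<in> unit_nhds"
  then obtain N0 where N0: "open N0" "1 \<in> N0" "N0 \<subseteq> U" by (rule un_elim)
  have "open ((\<lambda>(p, q). p * x * q) ` (N0 \<times> N0))"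
    using ocs open_Times[OF N0(1) N0(1)] unfolding open_central_shifts_def by blast
  moreover have "(\<lambda>(p, q). p * x * q) ` (N0 \<times> N0) = tri_prod N0 x N0"
    unfolding tri_prod_def by auto
  moreover have "x \<in> tri_prod N0 x N0" using N0 unfolding tri_prod_def by force
  moreover have "tri_prod N0 x N0 \<subseteq> tri_prod U x U" using N0 unfolding tri_prod_def by blast
  ultimately show "is_nhd (tri_prod U x U) x" unfolding is_nhd_def by metis
qed

definition setmul :: "'a::monoid_mult set \<Rightarrow> 'a set \<Rightarrow> 'a set" where
  "setmul A B = {a * b | a b. a \<in> A \<and> b \<in> B}"

lemma setmul_un: "U \<in> unit_nhds \<Longrightarrow> V \<in> unit_nhds \<Longrightarrow> setmul U V \<in> (unit_nhds :: 'a::topological_monoid_mult set set)"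
  unfolding unit_nhds_def setmul_def
proof -
  assume U: "U \<in> {U. \<exists>G. open G \<and> 1 \<in> G \<and> G \<subseteq> U}" and V: "V \<in> {U. \<exists>G. open G \<and> (1::'a) \<in> G \<and> G \<subseteq> U}"
  from U obtain G where G: "open G" "1 \<in> G" "G \<subseteq> U" by blast
  from V have "1 \<in> V" by blast
  then have "G \<subseteq> {a * b |a b. a \<in> U \<and> b \<in> V}" using G by force
  then show "{a * b |a b. a \<in> U \<and> b \<in> V} \<in> {U. \<exists>G. open G \<and> 1 \<in> G \<and> G \<subseteq> U}" using G by blast
qed

lemma comp_LR: "ent_comp (LR_entourage U V) (LR_entourage U' V') = LR_entourage (setmul U' U) (setmul V V')"
proof (rule set_eqI, rule iffI)
  fix p assume "p \<in> ent_comp (LR_entourage U V) (LR_entourage U' V')"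
  then obtain x z y where p: "p = (x, z)" "y \<in> tri_prod U x V" "z \<in> tri_prod U' y V'"
    unfolding ent_comp_def LR_entourage_def by blast
  then obtain u v u' v' where "u \<in> U" "v \<in> V" "u' \<in> U'" "v' \<in> V'" "y = u * x * v" "z = u' * y * v'"
    unfolding tri_prod_def by blast
  then have "z = (u' * u) * x * (v * v')" "u' * u \<in> setmul U' U" "v * v' \<in> setmul V V'"
    by (auto simp: mult.assoc setmul_def)
  then show "p \<in> LR_entourage (setmul U' U) (setmul V V')"
    unfolding p LR_entourage_def tri_prod_def by blast
next
  fix p assume "p \<in> LR_entourage (setmul U' U) (setmul V V')"
  then obtain x z a b where p: "p = (x, z)" "a \<in> setmul U' U" "b \<in> setmul V V'" "z = a * x * b"
    unfolding LR_entourage_def tri_prod_def by blast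
  then obtain u v u' v' where uv: "u \<in> U" "v \<in> V" "u' \<in> U'" "v' \<in> V'" "a = u' * u" "b = v * v'"
    unfolding setmul_def by blast
  have "u * x * v \<in> tri_prod U x V" using uv unfolding tri_prod_def by blast
  moreover have "z \<in> tri_prod U' (u * x * v) V'"
    using uv p(4) unfolding tri_prod_def by (auto simp: mult.assoc)
  ultimately show "p \<in> ent_comp (LR_entourage U V) (LR_entourage U' V')"
    unfolding p ent_comp_def LR_entourage_def by blast
qed

lemma LR_baseI: "U \<in> unit_nhds \<Longrightarrow> V \<in> unit_nhds \<Longrightarrow> LR_entourage U V \<in> (LR_base :: ('a::topological_monoid_mult \<times> 'a) set set)"
  unfolding LR_base_def by blast

lemma LR_baseE: "E \<in> (LR_base :: ('a::topological_monoid_mult \<times> 'a) set set) \<Longrightarrow> (\<And>U V. U \<in> unit_nhds \<Longrightarrow> V \<in> unit_nhds \<Longrightarrow> E = LR_entourage U V \<Longrightarrow> P) \<Longrightarrow> P"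
  unfolding LR_base_def by blast

lemma rotund_LR_comp:
  assumes "E \<in> (LR_base :: ('a::topological_monoid_mult \<times> 'a) set set)" "F \<in> LR_base"
  shows "ent_comp E F \<in> LR_base"
proof -
  obtain U V where h1: "U \<in> unit_nhds" "V \<in> unit_nhds" "E = LR_entourage U V"
    using assms(1) by (rule LR_baseE)
  obtain U' V' where h2: "U' \<in> unit_nhds" "V' \<in> unit_nhds" "F = LR_entourage U' V'"
    using assms(2) by (rule LR_baseE)
  have "LR_entourage (setmul U' U) (setmul V V') \<in> LR_base"
    by (rule LR_baseI; rule setmul_un) (fact h1 h2)+
  then show ?thesis unfolding h1(3) h2(3) comp_LR .
qed

lemma rotund_LR_ball:
  assumes "E \<in> (LR_base :: ('a::topological_monoid_mult \<times> 'a) set set)" "F \<in> LR_base"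
  shows "ball_set_q (closure A) E \<subseteq> closure (ball_set_q A (ent_comp F E))"
proof
  obtain U V where UV: "U \<in> unit_nhds" "V \<in> unit_nhds" "E = LR_entourage U V"
    using assms(1) by (rule LR_baseE)
  obtain U' V' where UV': "U' \<in> unit_nhds" "V' \<in> unit_nhds" "F = LR_entourage U' V'"
    using assms(2) by (rule LR_baseE)
  fix z assume "z \<in> ball_set_q (closure A) E"
  then obtain a where a: "a \<in> closure A" "z \<in> tri_prod U a V"
    unfolding ball_set_q_def UV(3) ball_LR by blast
  then obtain u v where auv: "u \<in> U" "v \<in> V" "z = u * a * v"
    unfolding tri_prod_def by blast
  have c: "continuous_on UNIV (\<lambda>t. u * t * v)" by (intro continuous_intros)
  have 1: "(\<lambda>t. u * t * v) ` closure A \<subseteq> closure ((\<lambda>t. u * t * v) ` A)"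
    by (rule continuous_image_closure_subset[OF c]) simp
  have um: "u \<in> setmul U U'"
  proof -
    have "u = u * 1" by simp
    then show ?thesis unfolding setmul_def using auv(1) un_one[OF UV'(1)] by blast
  qed
  have vm: "v \<in> setmul V' V"
  proof -
    have "v = 1 * v" by simp
    then show ?thesis unfolding setmul_def using auv(2) un_one[OF UV'(2)] by blast
  qed
  have 2: "(\<lambda>t. u * t * v) ` A \<subseteq> ball_set_q A (ent_comp F E)"
  proof
    fix w assume "w \<in> (\<lambda>t. u * t * v) ` A"
    then obtain t where t: "t \<in> A" "w = u * t * v" by blast
    have "w \<in> tri_prod (setmul U U') t (setmul V' V)" using t um vm
      unfolding tri_prod_def by blast
    then have "w \<in> ball_q t (ent_comp F E)" unfolding UV(3) UV'(3) comp_LR ball_LR .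
    then show "w \<in> ball_set_q A (ent_comp F E)" unfolding ball_set_q_def using t(1) by blast
  qed
  have 3: "closure ((\<lambda>t. u * t * v) ` A) \<subseteq> closure (ball_set_q A (ent_comp F E))"
    using 2 by (rule closure_mono)
  have "z \<in> (\<lambda>t. u * t * v) ` closure A" using a(1) auv(3) by blast
  then show "z \<in> closure (ball_set_q A (ent_comp F E))" using 1 3 by blast
qed

lemma rotund_LR: "rotund (LR :: ('a::topological_monoid_mult \<times> 'a) set set)"
  unfolding rotund_def
proof (rule exI[of _ LR_base], rule conjI)
  show "is_qu_base LR_base (LR :: ('a \<times> 'a) set set)"
    unfolding is_qu_base_def LR_def by blast
  show "rotund_base (LR_base :: ('a \<times> 'a) set set)"
    unfolding rotund_base_def
  proof (intro conjI ballI allI)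
    fix E F :: "('a \<times> 'a) set" assume "E \<in> LR_base" "F \<in> LR_base"
    then show "ent_comp E F \<in> LR_base" by (rule rotund_LR_comp)
  next
    fix A :: "'a set" and E F :: "('a \<times> 'a) set" assume "E \<in> LR_base" "F \<in> LR_base"
    then show "ball_set_q (closure A) E \<subseteq> closure (ball_set_q A (ent_comp F E))"
      by (rule rotund_LR_ball)
  qed
qed

theorem proposition5p1:
  fixes S :: "'a::topological_monoid_mult itself"
  shows "(qu_generates_topology (LR :: ('a \<times> 'a) set set) \<longleftrightarrow> open_unit S)
       \<and> (open_unit S \<longleftrightarrow> open_central_shifts S)
       \<and> (open_unit S \<longrightarrow> rotund (LR :: ('a \<times> 'a) set set))"
proof (intro conjI iffI impI)
  show "qu_generates_topology (LR :: ('a \<times> 'a) set set) \<Longrightarrow> open_unit S" by (rule gen_imp_ou)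
  assume ou: "open_unit S"
  show "qu_generates_topology (LR :: ('a \<times> 'a) set set)"
    unfolding qu_generates_topology_def
  proof (rule set_eqI, rule iffI)
    fix W :: "'a set" assume "W \<in> qu_topology LR"
    then have "open W" by (rule qu_open[OF ou])
    then show "W \<in> {W. open W}" by simp
  next
    fix W :: "'a set" assume "W \<in> {W. open W}"
    then have "open W" by simp
    then show "W \<in> qu_topology LR" by (rule open_in_qu)
  qed
next
  show "open_unit S \<Longrightarrow> open_central_shifts S" by (rule ou_imp_ocs)
  show "open_central_shifts S \<Longrightarrow> open_unit S" by (rule ocs_imp_ou)
  show "rotund (LR :: ('a \<times> 'a) set set)" by (rule rotund_LR)
qed

end
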